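(* Let $G'=(V,E')$ be a simple undirected loop-free graph with $V=\{1,\ldots,n\}$, let each pair $\{i,j\}$ of distinct nodes have a cost $c_{ij}\ge0$, let $B\ge0$, and for each $i\in V$ let $D_i=\{L_i,L_i+1,\ldots,R_i\}\subseteq\{0,\ldots,n-1\}$ be a nonempty interval. Let $H$ be the weighted graph constructed from these data as described in the context. Then $H$ has a perfect matching of total cost at most $B$ if and only if there is an edge set $E$ on $V$ with $\sum_{e\in E\triangle E'}c_e\le B$ such that in $(V,E)$ every node $i$ has degree in $D_i$.
   Context: Write $d_i$ for the degree of $i$ in $G'$. The graph $H$ is built as follows. (a) For each edge $e=\{i,i'\}\in E'$ add two nodes $y^-_{e,i},y^-_{e,i'}$ joined by an edge; for each non-edge pair $e=\{i,i'\}\notin E'$ ($i\ne i'$) add two nodes $y^+_{e,i},y^+_{e,i'}$ joined by an edge. (b) For each $i\in V$ add a set $X^+_i$ of $\min(R_i,n-d_i-1)$ nodes and a set $X^-_i$ of $\min(n-L_i-1,d_i)$ nodes; join every node of $X^+_i$ to every $y^+_{e,i}$ (over all non-edges $e$ at $i$), every node of $X^-_i$ to every $y^-_{e,i}$ (over all edges $e$ at $i$), and every node of $X^+_i$ to every node of $X^-_i$. (c) Let $\sigma_i=d_i+|X^+_i|-|X^-_i|$ (one has $L_i\le\sigma_i\le R_i$). Add a set $Z^+_i$ of $\sigma_i-L_i$ nodes joined completely to $X^+_i$, and a set $Z^-_i$ of $R_i-\sigma_i$ nodes joined completely to $X^-_i$. Add all edges among the union of all $Z^+_i,Z^-_i$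 over all $i$ (a complete graph). If the total number of nodes so far is odd, add one extra node $\hat z$ adjacent to all nodes of all $Z^+_i,Z^-_i$. (d) Costs: for each $e=\{i,i'\}\in E'$, each edge between $y^-_{e,i}$ and a node of $X^-_i$ and between $y^-_{e,i'}$ and a node of $X^-_{i'}$ has cost $c_e/2$; for each $e=\{i,i'\}\notin E'$, each edge between $y^+_{e,i}$ and a node of $X^+_i$ and between $y^+_{e,i'}$ and a node of $X^+_{i'}$ has cost $c_e/2$; all other edges of $H$ have cost $0$. The cost of a matching is the sum of the costs of its edges. For edge sets, $c_{ij}$ is the cost of removing $\{i,j\}$ if it lies in $E'$ and of adding it otherwise; $E\triangle E'$ is the symmetric difference. *)

theory Defs
  imports Complex_Main
begin

text \<open>Nodes of the auxiliary graph H.  Ym e i is y^-_{e,i}, Yp e i is y^+_{e,i};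
  Xp i k is the k-th node of X^+_i (k < |X^+_i|), etc.; Zhat is the extra node.\<close>
datatype hnode = Ym "nat set" nat | Yp "nat set" nat | Xp nat nat | Xm nat nat
  | Zp nat nat | Zm nat nat | Zhat

definition pairs :: "nat \<Rightarrow> nat set set" where
  "pairs n = {{i, j} | i j. i \<in> {1..n} \<and> j \<in> {1..n} \<and> i \<noteq> j}"

definition gdeg :: "nat set set \<Rightarrow> nat \<Rightarrow> nat" where
  "gdeg E i = card {j. {i, j} \<in> E}"

definition nxp :: "nat \<Rightarrow> nat set set \<Rightarrow> (nat \<Rightarrow> nat) \<Rightarrow> nat \<Rightarrow> nat" where
  "nxp n E R i = min (R i) (n - gdeg E i - 1)"

definition nxm :: "nat \<Rightarrow> nat set set \<Rightarrow> (nat \<Rightarrow> nat) \<Rightarrow> nat \<Rightarrow> nat" where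
  "nxm n E L i = min (n - L i - 1) (gdeg E i)"

definition sig :: "nat \<Rightarrow> nat set set \<Rightarrow> (nat \<Rightarrow> nat) \<Rightarrow> (nat \<Rightarrow> nat) \<Rightarrow> nat \<Rightarrow> int" where
  "sig n E L R i = int (gdeg E i) + int (nxp n E R i) - int (nxm n E L i)"

definition nzp :: "nat \<Rightarrow> nat set set \<Rightarrow> (nat \<Rightarrow> nat) \<Rightarrow> (nat \<Rightarrow> nat) \<Rightarrow> nat \<Rightarrow> nat" where
  "nzp n E L R i = nat (sig n E L R i - int (L i))"

definition nzm :: "nat \<Rightarrow> nat set set \<Rightarrow> (nat \<Rightarrow> nat) \<Rightarrow> (nat \<Rightarrow> nat) \<Rightarrow> nat \<Rightarrow> nat" where
  "nzm n E L R i = nat (int (R i) - sig n E L R i)"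

definition Ynodes :: "nat \<Rightarrow> nat set set \<Rightarrow> hnode set" where
  "Ynodes n E = {Ym e i | e i. e \<in> E \<and> i \<in> e} \<union> {Yp e i | e i. e \<in> pairs n - E \<and> i \<in> e}"

definition Xnodes :: "nat \<Rightarrow> nat set set \<Rightarrow> (nat \<Rightarrow> nat) \<Rightarrow> (nat \<Rightarrow> nat) \<Rightarrow> hnode set" where
  "Xnodes n E L R = {Xp i k | i k. i \<in> {1..n} \<and> k < nxp n E R i}
                  \<union> {Xm i k | i k. i \<in> {1..n} \<and> k < nxm n E L i}"

definition Znodes :: "nat \<Rightarrow> nat set set \<Rightarrow> (nat \<Rightarrow> nat) \<Rightarrow> (nat \<Rightarrow> nat) \<Rightarrow> hnode set" where
  "Znodes n E L R = {Zp i k | i k. i \<in> {1..n} \<and> k < nzp n E L R i}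
                  \<union> {Zm i k | i k. i \<in> {1..n} \<and> k < nzm n E L R i}"

definition HV0 :: "nat \<Rightarrow> nat set set \<Rightarrow> (nat \<Rightarrow> nat) \<Rightarrow> (nat \<Rightarrow> nat) \<Rightarrow> hnode set" where
  "HV0 n E L R = Ynodes n E \<union> Xnodes n E L R \<union> Znodes n E L R"

definition HV :: "nat \<Rightarrow> nat set set \<Rightarrow> (nat \<Rightarrow> nat) \<Rightarrow> (nat \<Rightarrow> nat) \<Rightarrow> hnode set" where
  "HV n E L R = HV0 n E L R \<union> (if odd (card (HV0 n E L R)) then {Zhat} else {})"

definition HE :: "nat \<Rightarrow> nat set set \<Rightarrow> (nat \<Rightarrow> nat) \<Rightarrow> (nat \<Rightarrow> nat) \<Rightarrow> hnode set set" where
  "HE n E L R =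
     {{Ym e i, Ym e j} | e i j. e \<in> E \<and> e = {i, j} \<and> i \<noteq> j}
   \<union> {{Yp e i, Yp e j} | e i j. e \<in> pairs n - E \<and> e = {i, j} \<and> i \<noteq> j}
   \<union> {{Xp i k, Yp e i} | i k e. Xp i k \<in> HV0 n E L R \<and> Yp e i \<in> HV0 n E L R}
   \<union> {{Xm i k, Ym e i} | i k e. Xm i k \<in> HV0 n E L R \<and> Ym e i \<in> HV0 n E L R}
   \<union> {{Xp i k, Xm i l} | i k l. Xp i k \<in> HV0 n E L R \<and> Xm i l \<in> HV0 n E L R}
   \<union> {{Zp i k, Xp i l} | i k l. Zp i k \<in> HV0 n E L R \<and> Xp i l \<in> HV0 n E L R}
   \<union> {{Zm i k, Xm i l} | i k l. Zm i k \<in> HV0 n E L R \<and> Xm i l \<in> HV0 n E L R}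
   \<union> {{z, z'} | z z'. z \<in> Znodes n E L R \<and> z' \<in> Znodes n E L R \<and> z \<noteq> z'}
   \<union> {{Zhat, z} | z. Zhat \<in> HV n E L R \<and> z \<in> Znodes n E L R}"

fun hc :: "(nat set \<Rightarrow> real) \<Rightarrow> hnode \<Rightarrow> hnode \<Rightarrow> real" where
  "hc c (Xm i k) (Ym e j) = c e / 2"
| "hc c (Xp i k) (Yp e j) = c e / 2"
| "hc c _ _ = 0"

text \<open>Cost of an edge {u,v} (u \<noteq> v) is hc u v + hc v u, i.e. the cost given in (d).\<close>
definition ecost :: "(nat set \<Rightarrow> real) \<Rightarrow> hnode set \<Rightarrow> real" where
  "ecost c f = (\<Sum>u\<in>f. \<Sum>v\<in>f. hc c u v)"

definition mcost :: "(nat set \<Rightarrow> real) \<Rightarrow> hnode set set \<Rightarrow> real" where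
  "mcost c M = (\<Sum>f\<in>M. ecost c f)"

definition perfect_matching :: "'a set \<Rightarrow> 'a set set \<Rightarrow> 'a set set \<Rightarrow> bool" where
  "perfect_matching V Ed M \<longleftrightarrow> M \<subseteq> Ed \<and> (\<forall>v\<in>V. \<exists>!f. f \<in> M \<and> v \<in> f)"

end

theory Submission
  imports Defs
begin


lemma inv_pm:
  assumes "\<forall>v\<in>V. \<pi> v \<in> V \<and> \<pi> v \<noteq> v \<and> \<pi> (\<pi> v) = v \<and> {v, \<pi> v} \<in> Ed"
  shows "perfect_matching V Ed {{v, \<pi> v} | v. v \<in> V}"
  unfolding perfect_matching_def
proof (intro conjI ballI)
  show "{{v, \<pi> v} |v. v \<in> V} \<subseteq> Ed" using assms by auto
  fix v assume v: "v \<in> V"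
  show "\<exists>!f. f \<in> {{v, \<pi> v} |v. v \<in> V} \<and> v \<in> f"
  proof (rule ex1I[of _ "{v, \<pi> v}"])
    show "{v, \<pi> v} \<in> {{v, \<pi> v} |v. v \<in> V} \<and> v \<in> {v, \<pi> v}" using v by auto
  next
    fix f assume "f \<in> {{v, \<pi> v} |v. v \<in> V} \<and> v \<in> f"
    then obtain u where u: "u \<in> V" "f = {u, \<pi> u}" "v \<in> f" by auto
    then have "v = u \<or> v = \<pi> u" by auto
    then show "f = {v, \<pi> v}" using u assms by auto
  qed
qed

lemma pm_inv:
  assumes pm: "perfect_matching V Ed M"
    and ed: "\<forall>f\<in>Ed. \<exists>a b. f = {a,b} \<and> a \<noteq> b \<and> a \<in> V \<and> b \<in> V"
  shows "\<exists>\<pi>. (\<forall>v\<in>V. \<pi> v \<in> V \<and> \<pi> v \<noteq> v \<and> \<pi> (\<pi> v) = v \<and> {v, \<pi> v} \<in> Ed)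
     \<and> M = {{v, \<pi> v} | v. v \<in> V}"
proof -
  have MEd: "M \<subseteq> Ed" and uq: "\<forall>v\<in>V. \<exists>!f. f \<in> M \<and> v \<in> f"
    using pm unfolding perfect_matching_def by auto
  have uniq: "f1 = f2" if "v \<in> V" "f1 \<in> M" "v \<in> f1" "f2 \<in> M" "v \<in> f2" for v f1 f2
  proof -
    from uq that(1) have "\<exists>!f. f \<in> M \<and> v \<in> f" by blast
    then obtain g where "\<forall>h. h \<in> M \<and> v \<in> h \<longrightarrow> h = g" by (auto elim!: ex1E)
    then show ?thesis using that by blast
  qed
  have ex: "\<exists>w. {v, w} \<in> M" if vV: "v \<in> V" for v
  proof -
    have "\<exists>!f. f \<in> M \<and> v \<in> f" using uq vV by (rule bspec)
    then obtain f where "f \<in> M" "v \<in> f" by (auto elim!: ex1E)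
    moreover have "f \<in> Ed" using MEd \<open>f \<in> M\<close> by (rule subsetD)
    moreover obtain a b where "f = {a,b}" using ed[rule_format, OF \<open>f \<in> Ed\<close>] by blast
    ultimately have "f = {v, b} \<or> f = {v, a}" by (auto simp: insert_commute)
    then show ?thesis using \<open>f \<in> M\<close> by blast
  qed
  have un: "w = w'" if vV: "v \<in> V" and vw: "{v, w} \<in> M" and vw': "{v, w'} \<in> M" for v w w'
  proof -
    have "{v,w} = {v,w'}" using uniq[of v "{v,w}" "{v,w'}"] vV vw vw' by blast
    moreover have "w \<noteq> v"
    proof
      assume "w = v"
      have "{v, w} \<in> Ed" using MEd vw by (rule subsetD)
      from ed[rule_format, OF this] obtain a b where "{v, w} = {a,b}" "a \<noteq> b" by blast
      then show False using \<open>w = v\<close> by (auto simp: doubleton_eq_iff)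
    qed
    ultimately show ?thesis by (auto simp: doubleton_eq_iff)
  qed
  define \<pi> where "\<pi> v = (THE w. {v, w} \<in> M)" for v
  have pM: "{v, \<pi> v} \<in> M" if vV: "v \<in> V" for v
  proof -
    obtain w where w: "{v, w} \<in> M" using ex[OF vV] by blast
    have "\<pi> v = w" unfolding \<pi>_def
    proof (rule the_equality)
      show "{v, w} \<in> M" by (rule w)
      show "\<And>w'. {v, w'} \<in> M \<Longrightarrow> w' = w" using un[OF vV] w by blast
    qed
    then show ?thesis using w by simp
  qed
  have pV: "\<pi> v \<in> V \<and> \<pi> v \<noteq> v" if vV: "v \<in> V" for v
  proof -
    have "{v, \<pi> v} \<in> Ed" using pM[OF vV] MEd by blast
    from ed[rule_format, OF this] obtain a b where "{v, \<pi> v} = {a,b}" "a \<noteq> b" "a \<in> V" "b \<in> V" by blast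
    then show ?thesis by (auto simp: doubleton_eq_iff)
  qed
  have pp: "\<pi> (\<pi> v) = v" if "v \<in> V" for v
  proof -
    have "{\<pi> v, v} \<in> M" using pM[OF that] by (simp add: insert_commute)
    then show ?thesis using un[of "\<pi> v" "\<pi> (\<pi> v)" v] pM pV that by blast
  qed
  have "M = {{v, \<pi> v} | v. v \<in> V}"
  proof
    show "M \<subseteq> {{v, \<pi> v} | v. v \<in> V}"
    proof
      fix f assume f: "f \<in> M"
      have "f \<in> Ed" using MEd f by (rule subsetD)
      from ed[rule_format, OF this] obtain a b where ab: "f = {a,b}" "a \<in> V" by blast
      then have "f = {a, \<pi> a}" using uniq[of a f "{a, \<pi> a}"] pM[of a] f by blast
      then show "f \<in> {{v, \<pi> v} | v. v \<in> V}" using ab by blast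
    qed
  next
    show "{{v, \<pi> v} | v. v \<in> V} \<subseteq> M" using pM by blast
  qed
  moreover have "\<forall>v\<in>V. \<pi> v \<in> V \<and> \<pi> v \<noteq> v \<and> \<pi> (\<pi> v) = v \<and> {v, \<pi> v} \<in> Ed"
    using pM pV pp MEd by blast
  ultimately show ?thesis by blast
qed

lemma hc_self: "hc c u u = 0"
  by (cases u) auto

lemma cost_inv:
  assumes fin: "finite V" and inv: "\<forall>v\<in>V. \<pi> v \<in> V \<and> \<pi> v \<noteq> v \<and> \<pi> (\<pi> v) = v"
  shows "mcost c {{v, \<pi> v} | v. v \<in> V} = (\<Sum>v\<in>V. hc c v (\<pi> v))"
proof -
  have M: "{{v, \<pi> v} | v. v \<in> V} = (\<lambda>v. {v, \<pi> v}) ` V" by auto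
  have "(\<Sum>v\<in>V. hc c v (\<pi> v)) = (\<Sum>f\<in>(\<lambda>v. {v, \<pi> v}) ` V. \<Sum>v\<in>{x\<in>V. {x, \<pi> x} = f}. hc c v (\<pi> v))"
    using sum.image_gen[OF fin, of "\<lambda>v. hc c v (\<pi> v)" "\<lambda>v. {v, \<pi> v}"] .
  also have "\<dots> = (\<Sum>f\<in>(\<lambda>v. {v, \<pi> v}) ` V. ecost c f)"
  proof (rule sum.cong[OF refl])
    fix f assume "f \<in> (\<lambda>v. {v, \<pi> v}) ` V"
    then obtain u where u: "u \<in> V" "f = {u, \<pi> u}" by auto
    have S: "{x\<in>V. {x, \<pi> x} = f} = {u, \<pi> u}"
    proof
      show "{x\<in>V. {x, \<pi> x} = f} \<subseteq> {u, \<pi> u}" using u by auto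
      show "{u, \<pi> u} \<subseteq> {x\<in>V. {x, \<pi> x} = f}" using u inv by (auto simp: insert_commute)
    qed
    have ne: "\<pi> u \<noteq> u" and pp: "\<pi> (\<pi> u) = u" using u inv by auto
    show "(\<Sum>v\<in>{x\<in>V. {x, \<pi> x} = f}. hc c v (\<pi> v)) = ecost c f"
    proof -
      have "(\<Sum>v\<in>{x\<in>V. {x, \<pi> x} = f}. hc c v (\<pi> v)) = (\<Sum>v\<in>{u, \<pi> u}. hc c v (\<pi> v))"
        using S by simp
      also have "\<dots> = hc c u (\<pi> u) + hc c (\<pi> u) u" using ne pp by simp
      also have "\<dots> = ecost c f" unfolding u(2) ecost_def using ne by (simp add: hc_self)
      finally show ?thesis .
    qed
  qed
  finally show ?thesis unfolding mcost_def M by simp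
qed

lemma even_inv:
  "finite S \<Longrightarrow> \<forall>v\<in>S. \<pi> v \<in> S \<and> \<pi> v \<noteq> v \<and> \<pi> (\<pi> v) = v \<Longrightarrow> even (card S)"
proof (induction "card S" arbitrary: S rule: less_induct)
  case less
  show ?case
  proof (cases "S = {}")
    case True then show ?thesis by simp
  next
    case False
    then obtain a where a: "a \<in> S" by auto
    let ?S = "S - {a, \<pi> a}"
    have "\<forall>v\<in>?S. \<pi> v \<in> ?S \<and> \<pi> v \<noteq> v \<and> \<pi> (\<pi> v) = v"
    proof
      fix v assume v: "v \<in> ?S"
      have "\<pi> v \<noteq> a" using v less.prems a by force
      moreover have "\<pi> v \<noteq> \<pi> a"
      proof
        assume "\<pi> v = \<pi> a"
        then have "\<pi> (\<pi> v) = \<pi> (\<pi> a)" by simp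
        then show False using v less.prems a by auto
      qed
      ultimately show "\<pi> v \<in> ?S \<and> \<pi> v \<noteq> v \<and> \<pi> (\<pi> v) = v" using v less.prems by auto
    qed
    moreover have sub: "{a, \<pi> a} \<subseteq> S" and ne: "\<pi> a \<noteq> a" using less.prems a by auto
    moreover have c2: "card {a, \<pi> a} = 2" using ne by simp
    moreover have c: "card ?S = card S - 2" using less.prems sub c2 by (simp add: card_Diff_subset)
    moreover have "card S \<ge> 2" using card_mono[OF less.prems(1) sub] ne by simp
    moreover have "card ?S < card S" using c \<open>card S \<ge> 2\<close> by simp
    ultimately have "even (card ?S)" using less(1)[of ?S] less.prems(1) by blast
    then show ?thesis using c \<open>card S \<ge> 2\<close> by simp
  qed
qed

lemma inv_even:
  "finite W \<Longrightarrow> even (card W) \<Longrightarrow> \<exists>\<rho>. \<forall>w\<in>W. \<rho> w \<in> W \<and> \<rho> w \<noteq> w \<and> \<rho> (\<rho> w) = w"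
proof (induction "card W" arbitrary: W rule: less_induct)
  case less
  show ?case
  proof (cases "W = {}")
    case True then show ?thesis by simp
  next
    case False
    then obtain a where a: "a \<in> W" by auto
    have "card W \<noteq> 1" using less.prems by auto
    have "W - {a} \<noteq> {}"
    proof
      assume "W - {a} = {}"
      then have "W = {a}" using a by auto
      then show False using less.prems by simp
    qed
    then obtain b where b: "b \<in> W" "b \<noteq> a" by auto
    let ?W = "W - {a, b}"
    have c: "card ?W = card W - 2" using less.prems a b by (simp add: card_Diff_subset)
    have "card W \<ge> 2" using less.prems a b
      by (metis card_2_iff card_mono empty_subsetI insert_subset)
    then have "card ?W < card W" "even (card ?W)" using c less.prems by auto
    then obtain \<rho> where \<rho>: "\<forall>w\<in>?W. \<rho> w \<in> ?W \<and> \<rho> w \<noteq> w \<and> \<rho> (\<rho> w) = w"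
      using less(1)[of ?W] less.prems(1) by blast
    define \<sigma> where "\<sigma> w = (if w = a then b else if w = b then a else \<rho> w)" for w
    have "\<forall>w\<in>W. \<sigma> w \<in> W \<and> \<sigma> w \<noteq> w \<and> \<sigma> (\<sigma> w) = w"
      using \<rho> a b unfolding \<sigma>_def by auto
    then show ?thesis by blast
  qed
qed

lemma swap_card:
  assumes "\<forall>v\<in>V. \<pi> v \<in> V \<and> \<pi> (\<pi> v) = v" "S \<subseteq> V" "T \<subseteq> V"
  shows "card {v\<in>S. \<pi> v \<in> T} = card {w\<in>T. \<pi> w \<in> S}"
proof -
  have pp: "\<pi> (\<pi> x) = x" if "x \<in> V" for x using assms(1) that by blast
  have img: "\<pi> ` {v\<in>S. \<pi> v \<in> T} = {w\<in>T. \<pi> w \<in> S}"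
  proof
    show "\<pi> ` {v\<in>S. \<pi> v \<in> T} \<subseteq> {w\<in>T. \<pi> w \<in> S}"
    proof
      fix w assume "w \<in> \<pi> ` {v\<in>S. \<pi> v \<in> T}"
      then obtain v where v: "v \<in> S" "\<pi> v \<in> T" "w = \<pi> v" by blast
      have "\<pi> w = v" using v pp assms(2) by blast
      then show "w \<in> {w\<in>T. \<pi> w \<in> S}" using v by simp
    qed
    show "{w\<in>T. \<pi> w \<in> S} \<subseteq> \<pi> ` {v\<in>S. \<pi> v \<in> T}"
    proof
      fix w assume w: "w \<in> {w\<in>T. \<pi> w \<in> S}"
      then have "\<pi> (\<pi> w) = w" using pp assms(3) by blast
      moreover have "\<pi> w \<in> {v\<in>S. \<pi> v \<in> T}" using w \<open>\<pi> (\<pi> w) = w\<close> by simp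
      ultimately show "w \<in> \<pi> ` {v\<in>S. \<pi> v \<in> T}" by (metis image_eqI)
    qed
  qed
  have inj: "inj_on \<pi> {v\<in>S. \<pi> v \<in> T}"
  proof
    fix x y assume "x \<in> {v\<in>S. \<pi> v \<in> T}" "y \<in> {v\<in>S. \<pi> v \<in> T}" "\<pi> x = \<pi> y"
    then have "x \<in> V" "y \<in> V" using assms(2) by auto
    then have "\<pi> (\<pi> x) = x" "\<pi> (\<pi> y) = y" using pp by auto
    then show "x = y" using \<open>\<pi> x = \<pi> y\<close> by metis
  qed
  show ?thesis using card_image[OF inj] img by simp
qed




definition oth :: "nat set \<Rightarrow> nat \<Rightarrow> nat" where
  "oth e i = the_elem (e - {i})"

lemma oth_pair: "i \<noteq> j \<Longrightarrow> oth {i, j} i = j \<and> oth {i, j} j = i"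
proof -
  assume "i \<noteq> j"
  then have "{i, j} - {i} = {j}" "{i, j} - {j} = {i}" by auto
  then show ?thesis unfolding oth_def by simp
qed

lemma pairsE:
  assumes "e \<in> pairs n"
  obtains i j where "e = {i, j}" "i \<noteq> j" "i \<in> {1..n}" "j \<in> {1..n}"
  using assms unfolding pairs_def by blast

lemma pairs_oth:
  assumes "e \<in> pairs n" "i \<in> e"
  shows "e = {i, oth e i} \<and> oth e i \<noteq> i \<and> oth e (oth e i) = i \<and> oth e i \<in> e"
proof -
  obtain a b where ab: "e = {a, b}" "a \<noteq> b" using assms(1) by (rule pairsE)
  show ?thesis
  proof (cases "i = a")
    case True then show ?thesis using ab oth_pair[of a b] by auto
  next
    case False then have "i = b" using ab assms(2) by auto
    then show ?thesis using ab oth_pair[of a b] by (auto simp: insert_commute)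
  qed
qed

lemma pairs_range: "e \<in> pairs n \<Longrightarrow> i \<in> e \<Longrightarrow> i \<in> {1..n}"
  by (auto elim!: pairsE)

lemma pairs_card: "e \<in> pairs n \<Longrightarrow> card e = 2"
  by (auto elim!: pairsE)

lemma pairs_fin: "finite (pairs n)"
proof -
  have "pairs n \<subseteq> Pow {1..n}" unfolding pairs_def by auto
  then show ?thesis by (rule finite_subset) simp
qed

lemma pairs_mem: "i \<in> {1..n} \<Longrightarrow> j \<in> {1..n} \<Longrightarrow> i \<noteq> j \<Longrightarrow> {i, j} \<in> pairs n"
  unfolding pairs_def by blast

lemma deg_card:
  assumes "F \<subseteq> pairs n"
  shows "gdeg F i = card {e\<in>F. i \<in> e}"
proof -
  have inj: "inj_on (\<lambda>j. {i, j}) {j. {i, j} \<in> F}"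
    by (rule inj_onI) (auto simp: doubleton_eq_iff)
  have img: "(\<lambda>j. {i, j}) ` {j. {i, j} \<in> F} = {e\<in>F. i \<in> e}"
  proof
    show "(\<lambda>j. {i, j}) ` {j. {i, j} \<in> F} \<subseteq> {e\<in>F. i \<in> e}" by auto
    show "{e\<in>F. i \<in> e} \<subseteq> (\<lambda>j. {i, j}) ` {j. {i, j} \<in> F}"
    proof
      fix e assume e: "e \<in> {e\<in>F. i \<in> e}"
      then have "e = {i, oth e i}" using pairs_oth[of e n i] assms by auto
      then show "e \<in> (\<lambda>j. {i, j}) ` {j. {i, j} \<in> F}" using e by (metis (mono_tags, lifting) image_eqI mem_Collect_eq)
    qed
  qed
  show ?thesis unfolding gdeg_def using card_image[OF inj] img by simp
qed

lemma card_pairs_at: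
  assumes "i \<in> {1..n}"
  shows "card {e\<in>pairs n. i \<in> e} = n - 1"
proof -
  have "{j. {i, j} \<in> pairs n} = {1..n} - {i}"
  proof
    show "{j. {i, j} \<in> pairs n} \<subseteq> {1..n} - {i}"
      by (auto simp: pairs_def doubleton_eq_iff)
    show "{1..n} - {i} \<subseteq> {j. {i, j} \<in> pairs n}" using assms pairs_mem by auto
  qed
  then have "gdeg (pairs n) i = n - 1" unfolding gdeg_def using assms by simp
  then show ?thesis using deg_card[of "pairs n" n i] by simp
qed

lemma card_nonpairs_at:
  assumes "i \<in> {1..n}" "F \<subseteq> pairs n"
  shows "card {e\<in>pairs n - F. i \<in> e} = n - 1 - gdeg F i" and "gdeg F i \<le> n - 1"
proof -
  have eq: "{e\<in>pairs n - F. i \<in> e} = {e\<in>pairs n. i \<in> e} - {e\<in>F. i \<in> e}" by auto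
  have sub: "{e\<in>F. i \<in> e} \<subseteq> {e\<in>pairs n. i \<in> e}" using assms by auto
  have fin: "finite {e\<in>pairs n. i \<in> e}" using pairs_fin by simp
  show "card {e\<in>pairs n - F. i \<in> e} = n - 1 - gdeg F i"
    unfolding eq card_Diff_subset[OF finite_subset[OF sub fin] sub]
    using card_pairs_at[OF assms(1)] deg_card[OF assms(2)] by simp
  show "gdeg F i \<le> n - 1" using card_mono[OF fin sub] card_pairs_at[OF assms(1)] deg_card[OF assms(2)] by simp
qed

fun isX :: "hnode \<Rightarrow> bool" where
  "isX (Xp _ _) = True" | "isX (Xm _ _) = True" | "isX _ = False"

fun isY :: "hnode \<Rightarrow> bool" where
  "isY (Yp _ _) = True" | "isY (Ym _ _) = True" | "isY _ = False"

fun yedge :: "hnode \<Rightarrow> nat set" where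
  "yedge (Yp e _) = e" | "yedge (Ym e _) = e" | "yedge _ = {}"

lemma hc_nonY: "\<not> isY v \<Longrightarrow> hc c x v = 0"
  by (cases x; cases v) auto

locale red =
  fixes n :: nat and E' :: "nat set set" and L R :: "nat \<Rightarrow> nat"
  assumes E'sub: "E' \<subseteq> pairs n" and LR: "\<forall>i\<in>{1..n}. L i \<le> R i \<and> R i \<le> n - 1"
begin

abbreviation "V0 \<equiv> HV0 n E' L R"
abbreviation "V \<equiv> HV n E' L R"
abbreviation "Ed \<equiv> HE n E' L R"
abbreviation "Zn \<equiv> Znodes n E' L R"
abbreviation "xp \<equiv> nxp n E' R"
abbreviation "xm \<equiv> nxm n E' L"
abbreviation "zpn \<equiv> nzp n E' L R"
abbreviation "zmn \<equiv> nzm n E' L R"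
abbreviation "dg \<equiv> gdeg E'"
abbreviation "sg \<equiv> sig n E' L R"

lemma Zhat_V0: "Zhat \<notin> V0"
  by (simp add: HV0_def Ynodes_def Xnodes_def Znodes_def)

lemma V0_simps:
  "Ym e i \<in> V0 \<longleftrightarrow> e \<in> E' \<and> i \<in> e"
  "Yp e i \<in> V0 \<longleftrightarrow> e \<in> pairs n - E' \<and> i \<in> e"
  "Xp i k \<in> V0 \<longleftrightarrow> i \<in> {1..n} \<and> k < xp i"
  "Xm i k \<in> V0 \<longleftrightarrow> i \<in> {1..n} \<and> k < xm i"
  "Zp i k \<in> V0 \<longleftrightarrow> i \<in> {1..n} \<and> k < zpn i"
  "Zm i k \<in> V0 \<longleftrightarrow> i \<in> {1..n} \<and> k < zmn i"
  by (auto simp: HV0_def Ynodes_def Xnodes_def Znodes_def)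

lemma V_simps:
  "Ym e i \<in> V \<longleftrightarrow> e \<in> E' \<and> i \<in> e"
  "Yp e i \<in> V \<longleftrightarrow> e \<in> pairs n - E' \<and> i \<in> e"
  "Xp i k \<in> V \<longleftrightarrow> i \<in> {1..n} \<and> k < xp i"
  "Xm i k \<in> V \<longleftrightarrow> i \<in> {1..n} \<and> k < xm i"
  "Zp i k \<in> V \<longleftrightarrow> i \<in> {1..n} \<and> k < zpn i"
  "Zm i k \<in> V \<longleftrightarrow> i \<in> {1..n} \<and> k < zmn i"
  "Zhat \<in> V \<longleftrightarrow> odd (card V0)"
  using V0_simps Zhat_V0 by (auto simp: HV_def)

lemma Zn_simps:
  "z \<in> Zn \<longleftrightarrow> (\<exists>i k. z = Zp i k \<and> i \<in> {1..n} \<and> k < zpn i) \<or> (\<exists>i k. z = Zm i k \<and> i \<in> {1..n} \<and> k < zmn i)"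
  by (auto simp: Znodes_def)

lemma Zn_V0: "Zn \<subseteq> V0" by (auto simp: HV0_def)
lemma V0_V: "V0 \<subseteq> V" by (auto simp: HV_def)

lemma fin_V0: "finite V0"
proof -
  have y: "Ynodes n E' \<subseteq> (\<lambda>(e,i). Ym e i) ` (pairs n \<times> {1..n}) \<union> (\<lambda>(e,i). Yp e i) ` (pairs n \<times> {1..n})"
    using E'sub pairs_range by (fastforce simp: Ynodes_def)
  have x: "Xnodes n E' L R = (\<Union>i\<in>{1..n}. Xp i ` {..<xp i}) \<union> (\<Union>i\<in>{1..n}. Xm i ` {..<xm i})"
    by (auto simp: Xnodes_def)
  have z: "Zn = (\<Union>i\<in>{1..n}. Zp i ` {..<zpn i}) \<union> (\<Union>i\<in>{1..n}. Zm i ` {..<zmn i})"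
    by (auto simp: Znodes_def)
  have "finite (Ynodes n E')" using y pairs_fin by (meson finite_Un finite_SigmaI finite_atLeastAtMost finite_imageI finite_subset)
  moreover have "finite (Xnodes n E' L R)" unfolding x by auto
  moreover have "finite Zn" unfolding z by auto
  ultimately show ?thesis unfolding HV0_def by auto
qed

lemma fin_V: "finite V" using fin_V0 by (simp add: HV_def)

lemma even_V: "even (card V)"
proof (cases "odd (card V0)")
  case True
  then have "V = insert Zhat V0" by (auto simp: HV_def)
  then show ?thesis using True Zhat_V0 fin_V0 by simp
next
  case False
  then show ?thesis by (simp add: HV_def)
qed

lemma ex2: "a \<noteq> b \<Longrightarrow> a \<in> X \<Longrightarrow> b \<in> X \<Longrightarrow> \<exists>x y. {a,b} = {x,y} \<and> x\<noteq>y \<and> x\<in>X \<and> y\<in>X"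
  by blast

lemma Zn_V: "z \<in> Zn \<Longrightarrow> z \<in> V" using Zn_V0 V0_V by blast
lemma Zn_nh: "z \<in> Zn \<Longrightarrow> z \<noteq> Zhat" using Zn_V0 Zhat_V0 by blast

lemma edges_ok: "\<forall>f\<in>Ed. \<exists>a b. f = {a,b} \<and> a \<noteq> b \<and> a \<in> V \<and> b \<in> V"
proof
  fix f assume "f \<in> Ed"
  then show "\<exists>a b. f = {a,b} \<and> a \<noteq> b \<and> a \<in> V \<and> b \<in> V"
    unfolding HE_def
    apply (simp only: Un_iff mem_Collect_eq)
    apply (elim disjE exE conjE)
    apply (simp_all only:)
    apply (rule ex2; simp add: V_simps V0_simps; fail)+
    apply (rule ex2; simp add: V_simps V0_simps Zn_V Zn_nh[symmetric])+
    done
qed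

lemma E_YmYm: "e \<in> E' \<Longrightarrow> e = {i, j} \<Longrightarrow> i \<noteq> j \<Longrightarrow> {Ym e i, Ym e j} \<in> Ed"
  unfolding HE_def
  apply (rule UnI1, rule UnI1, rule UnI1, rule UnI1, rule UnI1, rule UnI1, rule UnI1, rule UnI1)
  apply (rule CollectI)
  apply (rule exI, rule exI, rule exI, rule conjI, rule refl)
  apply simp
  done
lemma E_YpYp: "e \<in> pairs n - E' \<Longrightarrow> e = {i, j} \<Longrightarrow> i \<noteq> j \<Longrightarrow> {Yp e i, Yp e j} \<in> Ed"
  unfolding HE_def
  apply (rule UnI1, rule UnI1, rule UnI1, rule UnI1, rule UnI1, rule UnI1, rule UnI1, rule UnI2)
  apply (rule CollectI)
  apply (rule exI, rule exI, rule exI, rule conjI, rule refl)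
  apply simp
  done
lemma E_XpYp: "Xp i k \<in> V0 \<Longrightarrow> Yp e i \<in> V0 \<Longrightarrow> {Xp i k, Yp e i} \<in> Ed"
  unfolding HE_def
  apply (rule UnI1, rule UnI1, rule UnI1, rule UnI1, rule UnI1, rule UnI1, rule UnI2)
  apply (rule CollectI)
  apply (rule exI, rule exI, rule exI, rule conjI, rule refl)
  apply simp
  done
lemma E_XmYm: "Xm i k \<in> V0 \<Longrightarrow> Ym e i \<in> V0 \<Longrightarrow> {Xm i k, Ym e i} \<in> Ed"
  unfolding HE_def
  apply (rule UnI1, rule UnI1, rule UnI1, rule UnI1, rule UnI1, rule UnI2)
  apply (rule CollectI)
  apply (rule exI, rule exI, rule exI, rule conjI, rule refl)
  apply simp
  done
lemma E_XpXm: "Xp i k \<in> V0 \<Longrightarrow> Xm i l \<in> V0 \<Longrightarrow> {Xp i k, Xm i l} \<in> Ed"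
  unfolding HE_def
  apply (rule UnI1, rule UnI1, rule UnI1, rule UnI1, rule UnI2)
  apply (rule CollectI)
  apply (rule exI, rule exI, rule exI, rule conjI, rule refl)
  apply simp
  done
lemma E_ZpXp: "Zp i k \<in> V0 \<Longrightarrow> Xp i l \<in> V0 \<Longrightarrow> {Zp i k, Xp i l} \<in> Ed"
  unfolding HE_def
  apply (rule UnI1, rule UnI1, rule UnI1, rule UnI2)
  apply (rule CollectI)
  apply (rule exI, rule exI, rule exI, rule conjI, rule refl)
  apply simp
  done
lemma E_ZmXm: "Zm i k \<in> V0 \<Longrightarrow> Xm i l \<in> V0 \<Longrightarrow> {Zm i k, Xm i l} \<in> Ed"
  unfolding HE_def
  apply (rule UnI1, rule UnI1, rule UnI2)
  apply (rule CollectI)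
  apply (rule exI, rule exI, rule exI, rule conjI, rule refl)
  apply simp
  done
lemma E_ZZ: "z \<in> Zn \<Longrightarrow> z' \<in> Zn \<Longrightarrow> z \<noteq> z' \<Longrightarrow> {z, z'} \<in> Ed"
  unfolding HE_def
  apply (rule UnI1, rule UnI2)
  apply (rule CollectI)
  apply (rule exI, rule exI, rule conjI, rule refl)
  apply simp
  done
lemma E_hZ: "Zhat \<in> V \<Longrightarrow> z \<in> Zn \<Longrightarrow> {Zhat, z} \<in> Ed"
  unfolding HE_def
  apply (rule UnI2)
  apply (rule CollectI)
  apply (rule exI, rule conjI, rule refl)
  apply simp
  done

lemma N_Ym: "{Ym e i, w} \<in> Ed \<Longrightarrow> (\<exists>j. w = Ym e j \<and> e = {i, j} \<and> i \<noteq> j) \<or> (\<exists>k. w = Xm i k)"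
  unfolding HE_def by (auto simp: doubleton_eq_iff Znodes_def)
lemma N_Yp: "{Yp e i, w} \<in> Ed \<Longrightarrow> (\<exists>j. w = Yp e j \<and> e = {i, j} \<and> i \<noteq> j) \<or> (\<exists>k. w = Xp i k)"
  unfolding HE_def by (auto simp: doubleton_eq_iff Znodes_def)
lemma N_Xp: "{Xp i k, w} \<in> Ed \<Longrightarrow> (\<exists>e. w = Yp e i) \<or> (\<exists>l. w = Xm i l) \<or> (\<exists>l. w = Zp i l)"
  unfolding HE_def by (auto simp: doubleton_eq_iff Znodes_def)
lemma N_Xm: "{Xm i k, w} \<in> Ed \<Longrightarrow> (\<exists>e. w = Ym e i) \<or> (\<exists>l. w = Xp i l) \<or> (\<exists>l. w = Zm i l)"
  unfolding HE_def by (auto simp: doubleton_eq_iff Znodes_def)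
lemma N_Zp: "{Zp i k, w} \<in> Ed \<Longrightarrow> (\<exists>l. w = Xp i l) \<or> w \<in> Zn \<or> w = Zhat"
  unfolding HE_def by (auto simp: doubleton_eq_iff)
lemma N_Zm: "{Zm i k, w} \<in> Ed \<Longrightarrow> (\<exists>l. w = Xm i l) \<or> w \<in> Zn \<or> w = Zhat"
  unfolding HE_def by (auto simp: doubleton_eq_iff)

lemma sig_bounds:
  assumes "i \<in> {1..n}"
  shows "int (L i) \<le> sg i \<and> sg i \<le> int (R i)"
proof -
  have "dg i \<le> n - 1" using card_nonpairs_at(2)[OF assms E'sub] .
  moreover have "L i \<le> R i" "R i \<le> n - 1" using LR assms by auto
  moreover have "n \<ge> 1" using assms by auto
  ultimately show ?thesis unfolding sig_def nxp_def nxm_def by (simp add: min_def) arith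
qed

end




locale invl = red +
  fixes \<pi> :: "hnode \<Rightarrow> hnode"
  assumes inv: "\<forall>v\<in>V. \<pi> v \<in> V \<and> \<pi> v \<noteq> v \<and> \<pi> (\<pi> v) = v \<and> {v, \<pi> v} \<in> Ed"
begin

lemma pV: "v \<in> V \<Longrightarrow> \<pi> v \<in> V" using inv by blast
lemma pne: "v \<in> V \<Longrightarrow> \<pi> v \<noteq> v" using inv by blast
lemma ppi: "v \<in> V \<Longrightarrow> \<pi> (\<pi> v) = v" using inv by blast
lemma pE: "v \<in> V \<Longrightarrow> {v, \<pi> v} \<in> Ed" using inv by blast

lemma pi_Ym:
  assumes "e \<in> E'" "i \<in> e"
  shows "\<pi> (Ym e i) = Ym e (oth e i) \<or> (\<exists>k. \<pi> (Ym e i) = Xm i k \<and> k < xm i)"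
proof -
  have v: "Ym e i \<in> V" using assms by (simp add: V_simps)
  from N_Ym[OF pE[OF v]] show ?thesis
  proof (elim disjE exE conjE)
    fix j assume "\<pi> (Ym e i) = Ym e j" "e = {i, j}" "i \<noteq> j"
    then show ?thesis using oth_pair[of i j] by auto
  next
    fix k assume k: "\<pi> (Ym e i) = Xm i k"
    then have "k < xm i" using pV[OF v] by (simp add: V_simps)
    then show ?thesis using k by blast
  qed
qed

lemma pi_Yp:
  assumes "e \<in> pairs n - E'" "i \<in> e"
  shows "\<pi> (Yp e i) = Yp e (oth e i) \<or> (\<exists>k. \<pi> (Yp e i) = Xp i k \<and> k < xp i)"
proof -
  have v: "Yp e i \<in> V" using assms by (simp add: V_simps)
  from N_Yp[OF pE[OF v]] show ?thesis
  proof (elim disjE exE conjE)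
    fix j assume "\<pi> (Yp e i) = Yp e j" "e = {i, j}" "i \<noteq> j"
    then show ?thesis using oth_pair[of i j] by auto
  next
    fix k assume k: "\<pi> (Yp e i) = Xp i k"
    then have "k < xp i" using pV[OF v] by (simp add: V_simps)
    then show ?thesis using k by blast
  qed
qed

definition Epi :: "nat set set" where
  "Epi = {e\<in>E'. \<forall>i\<in>e. \<not> isX (\<pi> (Ym e i))} \<union> {e\<in>pairs n - E'. \<forall>i\<in>e. isX (\<pi> (Yp e i))}"

lemma Epi_sub: "Epi \<subseteq> pairs n"
  using E'sub unfolding Epi_def by auto

lemma Epi_Ym:
  assumes e: "e \<in> E'" and i: "i \<in> e"
  shows "e \<in> Epi \<longleftrightarrow> \<not> isX (\<pi> (Ym e i))"
proof
  assume "e \<in> Epi" then show "\<not> isX (\<pi> (Ym e i))" using e i unfolding Epi_def by auto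
next
  assume nx: "\<not> isX (\<pi> (Ym e i))"
  have ep: "e \<in> pairs n" using e E'sub by auto
  let ?j = "oth e i"
  have o: "e = {i, ?j}" "?j \<noteq> i" "oth e ?j = i" "?j \<in> e" using pairs_oth[OF ep i] by auto
  have p1: "\<pi> (Ym e i) = Ym e ?j" using pi_Ym[OF e i] nx by auto
  have "\<pi> (Ym e ?j) = Ym e i" using p1 ppi[of "Ym e i"] e i by (simp add: V_simps)
  then have "\<forall>i'\<in>{i, ?j}. \<not> isX (\<pi> (Ym e i'))" using p1 by simp
  then have "\<forall>i'\<in>e. \<not> isX (\<pi> (Ym e i'))" using o(1) by simp
  then show "e \<in> Epi" using e unfolding Epi_def by auto
qed

lemma Epi_Yp:
  assumes e: "e \<in> pairs n - E'" and i: "i \<in> e"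
  shows "e \<in> Epi \<longleftrightarrow> isX (\<pi> (Yp e i))"
proof
  assume "e \<in> Epi" then show "isX (\<pi> (Yp e i))" using e i unfolding Epi_def by auto
next
  assume x: "isX (\<pi> (Yp e i))"
  have ep: "e \<in> pairs n" using e by auto
  let ?j = "oth e i"
  have o: "e = {i, ?j}" "?j \<noteq> i" "oth e ?j = i" "?j \<in> e" using pairs_oth[OF ep i] by auto
  have "isX (\<pi> (Yp e ?j))"
  proof (rule ccontr)
    assume "\<not> isX (\<pi> (Yp e ?j))"
    then have "\<pi> (Yp e ?j) = Yp e i" using pi_Yp[OF e o(4)] o(3) by auto
    then have "\<pi> (Yp e i) = Yp e ?j" using ppi[of "Yp e ?j"] e o(4) by (simp add: V_simps)
    then show False using x by simp
  qed
  then have "\<forall>i'\<in>e. isX (\<pi> (Yp e i'))" using o x by auto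
  then show "e \<in> Epi" using e unfolding Epi_def by auto
qed

definition Ys :: "nat set \<Rightarrow> hnode set" where
  "Ys e = (if e \<in> E' then (\<lambda>i. Ym e i) ` e else (\<lambda>i. Yp e i) ` e)"

lemma cost:
  "(\<Sum>v\<in>V. hc c v (\<pi> v)) = (\<Sum>e\<in>(Epi - E') \<union> (E' - Epi). c e)"
proof -
  let ?D = "(Epi - E') \<union> (E' - Epi)"
  define T where "T = {v\<in>V. isY v \<and> isX (\<pi> v)}"
  have bij: "bij_betw \<pi> V V"
    by (rule bij_betw_byWitness[of V \<pi> \<pi>]) (auto simp: ppi pV)
  have s1: "(\<Sum>v\<in>V. hc c v (\<pi> v)) = (\<Sum>v\<in>V. hc c (\<pi> v) v)"
  proof -
    have "(\<Sum>v\<in>V. hc c (\<pi> v) (\<pi> (\<pi> v))) = (\<Sum>v\<in>V. hc c v (\<pi> v))"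
      by (rule sum.reindex_bij_betw[OF bij])
    moreover have "(\<Sum>v\<in>V. hc c (\<pi> v) (\<pi> (\<pi> v))) = (\<Sum>v\<in>V. hc c (\<pi> v) v)"
      by (rule sum.cong) (auto simp: ppi)
    ultimately show ?thesis by simp
  qed
  have s2: "hc c (\<pi> v) v = (if v \<in> T then c (yedge v) / 2 else 0)" if v: "v \<in> V" for v
  proof (cases v)
    case (Ym e i)
    then have ei: "e \<in> E'" "i \<in> e" using v by (auto simp: V_simps)
    from pi_Ym[OF ei] show ?thesis
    proof
      assume "\<pi> (Ym e i) = Ym e (oth e i)"
      then show ?thesis using Ym unfolding T_def by simp
    next
      assume "\<exists>k. \<pi> (Ym e i) = Xm i k \<and> k < xm i"
      then obtain k where "\<pi> (Ym e i) = Xm i k" by blast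
      then show ?thesis using Ym v unfolding T_def by simp
    qed
  next
    case (Yp e i)
    then have ei: "e \<in> pairs n - E'" "i \<in> e" using v by (auto simp: V_simps)
    from pi_Yp[OF ei] show ?thesis
    proof
      assume "\<pi> (Yp e i) = Yp e (oth e i)"
      then show ?thesis using Yp unfolding T_def by simp
    next
      assume "\<exists>k. \<pi> (Yp e i) = Xp i k \<and> k < xp i"
      then obtain k where "\<pi> (Yp e i) = Xp i k" by blast
      then show ?thesis using Yp v unfolding T_def by simp
    qed
  qed (auto simp: T_def hc_nonY)
  have TV: "T \<subseteq> V" unfolding T_def by auto
  have s3: "(\<Sum>v\<in>V. hc c (\<pi> v) v) = (\<Sum>v\<in>T. c (yedge v) / 2)"
  proof -
    have "(\<Sum>v\<in>V. hc c (\<pi> v) v) = (\<Sum>v\<in>V. if v \<in> T then c (yedge v) / 2 else 0)"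
      by (rule sum.cong) (auto simp: s2)
    also have "\<dots> = (\<Sum>v\<in>V \<inter> T. c (yedge v) / 2)"
      by (rule sum.inter_restrict[symmetric]) (rule fin_V)
    also have "V \<inter> T = T" using TV by auto
    finally show ?thesis .
  qed
  have s4: "T = (\<Union>e\<in>?D. Ys e)"
  proof
    show "T \<subseteq> (\<Union>e\<in>?D. Ys e)"
    proof
      fix v assume vT: "v \<in> T"
      then have v: "v \<in> V" "isY v" "isX (\<pi> v)" unfolding T_def by auto
      show "v \<in> (\<Union>e\<in>?D. Ys e)"
      proof (cases v)
        case (Ym e i)
        then have ei: "e \<in> E'" "i \<in> e" using v by (auto simp: V_simps)
        then have "e \<notin> Epi" using Epi_Ym[OF ei] v Ym by simp
        then show ?thesis using ei Ym unfolding Ys_def by auto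
      next
        case (Yp e i)
        then have ei: "e \<in> pairs n - E'" "i \<in> e" using v by (auto simp: V_simps)
        then have "e \<in> Epi" using Epi_Yp[OF ei] v Yp by simp
        then show ?thesis using ei Yp unfolding Ys_def by auto
      qed (use v in auto)
    qed
  next
    show "(\<Union>e\<in>?D. Ys e) \<subseteq> T"
    proof
      fix v assume "v \<in> (\<Union>e\<in>?D. Ys e)"
      then obtain e where e: "e \<in> ?D" "v \<in> Ys e" by blast
      show "v \<in> T"
      proof (cases "e \<in> E'")
        case True
        then obtain i where i: "i \<in> e" "v = Ym e i" using e unfolding Ys_def by auto
        have "e \<notin> Epi" using e True by auto
        then have "isX (\<pi> (Ym e i))" using Epi_Ym[OF True i(1)] by simp
        then show ?thesis using i True unfolding T_def by (simp add: V_simps)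
      next
        case False
        then obtain i where i: "i \<in> e" "v = Yp e i" using e unfolding Ys_def by auto
        have ee: "e \<in> pairs n - E'" using e False Epi_sub by auto
        have "e \<in> Epi" using e False by auto
        then have "isX (\<pi> (Yp e i))" using Epi_Yp[OF ee i(1)] by simp
        then show ?thesis using i ee unfolding T_def by (simp add: V_simps)
      qed
    qed
  qed
  have Dsub: "?D \<subseteq> pairs n" using Epi_sub E'sub by auto
  have finD: "finite ?D" using finite_subset[OF Dsub pairs_fin] .
  have finY: "finite (Ys e)" if "e \<in> ?D" for e
  proof -
    have "card e = 2" using pairs_card Dsub that by blast
    then have "finite e" by (metis card.infinite zero_neq_numeral)
    then show ?thesis unfolding Ys_def by auto
  qed
  have yed: "yedge v = e" if "v \<in> Ys e" for v e
    using that unfolding Ys_def by (auto split: if_splits)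
  have disj: "\<forall>e\<in>?D. \<forall>e'\<in>?D. e \<noteq> e' \<longrightarrow> Ys e \<inter> Ys e' = {}"
    using yed by blast
  have s5: "(\<Sum>v\<in>Ys e. c (yedge v) / 2) = c e" if "e \<in> ?D" for e
  proof -
    have "card e = 2" using pairs_card Dsub that by blast
    moreover have "card (Ys e) = card e"
      unfolding Ys_def by (auto intro!: card_image inj_onI)
    ultimately have "card (Ys e) = 2" by simp
    moreover have "(\<Sum>v\<in>Ys e. c (yedge v) / 2) = (\<Sum>v\<in>Ys e. c e / 2)"
      by (rule sum.cong) (auto simp: yed)
    ultimately show ?thesis by simp
  qed
  have "(\<Sum>v\<in>T. c (yedge v) / 2) = (\<Sum>e\<in>?D. \<Sum>v\<in>Ys e. c (yedge v) / 2)"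
    unfolding s4 by (rule sum.UNION_disjoint[OF finD _ disj]) (use finY in blast)
  also have "\<dots> = (\<Sum>e\<in>?D. c e)" by (rule sum.cong) (auto simp: s5)
  finally show ?thesis using s1 s3 by simp
qed


lemma card3:
  assumes "finite X" "\<forall>v\<in>X. \<pi> v \<in> A \<union> B \<union> C" "A \<inter> B = {}" "A \<inter> C = {}" "B \<inter> C = {}"
  shows "card X = card {v\<in>X. \<pi> v \<in> A} + card {v\<in>X. \<pi> v \<in> B} + card {v\<in>X. \<pi> v \<in> C}"
proof -
  have X: "X = ({v\<in>X. \<pi> v \<in> A} \<union> {v\<in>X. \<pi> v \<in> B}) \<union> {v\<in>X. \<pi> v \<in> C}" using assms(2) by auto
  have "card (({v\<in>X. \<pi> v \<in> A} \<union> {v\<in>X. \<pi> v \<in> B}) \<union> {v\<in>X. \<pi> v \<in> C})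
      = card ({v\<in>X. \<pi> v \<in> A} \<union> {v\<in>X. \<pi> v \<in> B}) + card {v\<in>X. \<pi> v \<in> C}"
    by (rule card_Un_disjoint) (use assms in auto)
  also have "card ({v\<in>X. \<pi> v \<in> A} \<union> {v\<in>X. \<pi> v \<in> B}) = card {v\<in>X. \<pi> v \<in> A} + card {v\<in>X. \<pi> v \<in> B}"
    by (rule card_Un_disjoint) (use assms in auto)
  finally show ?thesis using X by simp
qed

lemma deg:
  assumes i: "i \<in> {1..n}"
  shows "L i \<le> gdeg Epi i \<and> gdeg Epi i \<le> R i"
proof -
  define XP where "XP = Xp i ` {..<xp i}"
  define XM where "XM = Xm i ` {..<xm i}"
  define ZP where "ZP = Zp i ` {..<zpn i}"
  define ZM where "ZM = Zm i ` {..<zmn i}"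
  define YP where "YP = (\<lambda>e. Yp e i) ` {e\<in>pairs n - E'. i \<in> e}"
  define YM where "YM = (\<lambda>e. Ym e i) ` {e\<in>E'. i \<in> e}"
  define Add where "Add = {e\<in>Epi - E'. i \<in> e}"
  define Rem where "Rem = {e\<in>E' - Epi. i \<in> e}"
  have sub: "XP \<subseteq> V" "XM \<subseteq> V" "ZP \<subseteq> V" "ZM \<subseteq> V" "YP \<subseteq> V" "YM \<subseteq> V"
    unfolding XP_def XM_def ZP_def ZM_def YP_def YM_def using i by (auto simp: V_simps)
  have invV: "\<forall>v\<in>V. \<pi> v \<in> V \<and> \<pi> (\<pi> v) = v" using inv by blast
  have cXP: "card XP = xp i" unfolding XP_def by (simp add: card_image inj_on_def)
  have cXM: "card XM = xm i" unfolding XM_def by (simp add: card_image inj_on_def)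
  have cZP: "card ZP = zpn i" unfolding ZP_def by (simp add: card_image inj_on_def)
  have cZM: "card ZM = zmn i" unfolding ZM_def by (simp add: card_image inj_on_def)
  have finXP: "finite XP" "finite XM" "finite ZP" "finite ZM" unfolding XP_def XM_def ZP_def ZM_def by auto
  have nbXP: "\<forall>v\<in>XP. \<pi> v \<in> YP \<union> XM \<union> ZP"
  proof
    fix v assume v: "v \<in> XP"
    then obtain k where k: "v = Xp i k" "k < xp i" unfolding XP_def by auto
    have vV: "v \<in> V" using v sub by auto
    have pv: "\<pi> v \<in> V" using pV[OF vV] .
    from N_Xp[OF pE[OF vV, unfolded k(1)]] show "\<pi> v \<in> YP \<union> XM \<union> ZP"
    proof (elim disjE exE)
      fix e assume "\<pi> (Xp i k) = Yp e i"
      then show ?thesis using pv k unfolding YP_def by (auto simp: V_simps)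
    next
      fix l assume "\<pi> (Xp i k) = Xm i l"
      then show ?thesis using pv k unfolding XM_def by (auto simp: V_simps)
    next
      fix l assume "\<pi> (Xp i k) = Zp i l"
      then show ?thesis using pv k unfolding ZP_def by (auto simp: V_simps)
    qed
  qed
  have nbXM: "\<forall>v\<in>XM. \<pi> v \<in> YM \<union> XP \<union> ZM"
  proof
    fix v assume v: "v \<in> XM"
    then obtain k where k: "v = Xm i k" "k < xm i" unfolding XM_def by auto
    have vV: "v \<in> V" using v sub by auto
    have pv: "\<pi> v \<in> V" using pV[OF vV] .
    from N_Xm[OF pE[OF vV, unfolded k(1)]] show "\<pi> v \<in> YM \<union> XP \<union> ZM"
    proof (elim disjE exE)
      fix e assume "\<pi> (Xm i k) = Ym e i"
      then show ?thesis using pv k unfolding YM_def by (auto simp: V_simps)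
    next
      fix l assume "\<pi> (Xm i k) = Xp i l"
      then show ?thesis using pv k unfolding XP_def by (auto simp: V_simps)
    next
      fix l assume "\<pi> (Xm i k) = Zm i l"
      then show ?thesis using pv k unfolding ZM_def by (auto simp: V_simps)
    qed
  qed
  have eqP: "card XP = card {v\<in>XP. \<pi> v \<in> YP} + card {v\<in>XP. \<pi> v \<in> XM} + card {v\<in>XP. \<pi> v \<in> ZP}"
    by (rule card3[OF finXP(1) nbXP]) (auto simp: YP_def XM_def ZP_def)
  have eqM: "card XM = card {v\<in>XM. \<pi> v \<in> YM} + card {v\<in>XM. \<pi> v \<in> XP} + card {v\<in>XM. \<pi> v \<in> ZM}"
    by (rule card3[OF finXP(2) nbXM]) (auto simp: YM_def XP_def ZM_def)
  have PP: "card {v\<in>XP. \<pi> v \<in> XM} = card {v\<in>XM. \<pi> v \<in> XP}"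
    by (rule swap_card[OF invV sub(1) sub(2)])
  have Z1: "card {v\<in>XP. \<pi> v \<in> ZP} \<le> zpn i"
  proof -
    have "card {v\<in>XP. \<pi> v \<in> ZP} = card {v\<in>ZP. \<pi> v \<in> XP}"
      by (rule swap_card[OF invV sub(1) sub(3)])
    also have "\<dots> \<le> card ZP" by (rule card_mono[OF finXP(3)]) auto
    finally show ?thesis using cZP by simp
  qed
  have Z2: "card {v\<in>XM. \<pi> v \<in> ZM} \<le> zmn i"
  proof -
    have "card {v\<in>XM. \<pi> v \<in> ZM} = card {v\<in>ZM. \<pi> v \<in> XM}"
      by (rule swap_card[OF invV sub(2) sub(4)])
    also have "\<dots> \<le> card ZM" by (rule card_mono[OF finXP(4)]) auto
    finally show ?thesis using cZM by simp
  qed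
  have A: "card {v\<in>XP. \<pi> v \<in> YP} = card Add"
  proof -
    have "card {v\<in>XP. \<pi> v \<in> YP} = card {w\<in>YP. \<pi> w \<in> XP}"
      by (rule swap_card[OF invV sub(1) sub(5)])
    also have "{w\<in>YP. \<pi> w \<in> XP} = (\<lambda>e. Yp e i) ` Add"
    proof
      show "{w\<in>YP. \<pi> w \<in> XP} \<subseteq> (\<lambda>e. Yp e i) ` Add"
      proof
        fix w assume w: "w \<in> {w\<in>YP. \<pi> w \<in> XP}"
        then obtain e where e: "w = Yp e i" "e \<in> pairs n - E'" "i \<in> e" unfolding YP_def by auto
        have "isX (\<pi> w)" using w unfolding XP_def by auto
        then have "e \<in> Epi" using Epi_Yp[OF e(2,3)] e(1) by simp
        then show "w \<in> (\<lambda>e. Yp e i) ` Add" using e unfolding Add_def by auto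
      qed
      show "(\<lambda>e. Yp e i) ` Add \<subseteq> {w\<in>YP. \<pi> w \<in> XP}"
      proof
        fix w assume "w \<in> (\<lambda>e. Yp e i) ` Add"
        then obtain e where e: "w = Yp e i" "e \<in> Epi" "e \<notin> E'" "i \<in> e" unfolding Add_def by auto
        have ep: "e \<in> pairs n - E'" using e Epi_sub by auto
        have "isX (\<pi> (Yp e i))" using Epi_Yp[OF ep e(4)] e(2) by simp
        then obtain k where "\<pi> (Yp e i) = Xp i k" "k < xp i" using pi_Yp[OF ep e(4)] by auto
        then show "w \<in> {w\<in>YP. \<pi> w \<in> XP}" using e ep unfolding XP_def YP_def by auto
      qed
    qed
    also have "card ((\<lambda>e. Yp e i) ` Add) = card Add" by (simp add: card_image inj_on_def)
    finally show ?thesis .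
  qed
  have B: "card {v\<in>XM. \<pi> v \<in> YM} = card Rem"
  proof -
    have "card {v\<in>XM. \<pi> v \<in> YM} = card {w\<in>YM. \<pi> w \<in> XM}"
      by (rule swap_card[OF invV sub(2) sub(6)])
    also have "{w\<in>YM. \<pi> w \<in> XM} = (\<lambda>e. Ym e i) ` Rem"
    proof
      show "{w\<in>YM. \<pi> w \<in> XM} \<subseteq> (\<lambda>e. Ym e i) ` Rem"
      proof
        fix w assume w: "w \<in> {w\<in>YM. \<pi> w \<in> XM}"
        then obtain e where e: "w = Ym e i" "e \<in> E'" "i \<in> e" unfolding YM_def by auto
        have "isX (\<pi> w)" using w unfolding XM_def by auto
        then have "e \<notin> Epi" using Epi_Ym[OF e(2,3)] e(1) by simp
        then show "w \<in> (\<lambda>e. Ym e i) ` Rem" using e unfolding Rem_def by auto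
      qed
      show "(\<lambda>e. Ym e i) ` Rem \<subseteq> {w\<in>YM. \<pi> w \<in> XM}"
      proof
        fix w assume "w \<in> (\<lambda>e. Ym e i) ` Rem"
        then obtain e where e: "w = Ym e i" "e \<notin> Epi" "e \<in> E'" "i \<in> e" unfolding Rem_def by auto
        have "isX (\<pi> (Ym e i))" using Epi_Ym[OF e(3,4)] e(2) by simp
        then obtain k where "\<pi> (Ym e i) = Xm i k" "k < xm i" using pi_Ym[OF e(3,4)] by auto
        then show "w \<in> {w\<in>YM. \<pi> w \<in> XM}" using e unfolding XM_def YM_def by auto
      qed
    qed
    also have "card ((\<lambda>e. Ym e i) ` Rem) = card Rem" by (simp add: card_image inj_on_def)
    finally show ?thesis .
  qed
  have degeq: "gdeg Epi i = (dg i - card Rem) + card Add" and RemLe: "card Rem \<le> dg i"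
  proof -
    have fin1: "finite {e\<in>E'. i \<in> e}" using finite_subset[OF _ pairs_fin] E'sub by auto
    have fin2: "finite Add" using finite_subset[OF _ pairs_fin] Epi_sub unfolding Add_def by auto
    have RS: "Rem \<subseteq> {e\<in>E'. i \<in> e}" unfolding Rem_def by auto
    have "{e\<in>Epi. i \<in> e} = ({e\<in>E'. i \<in> e} - Rem) \<union> Add" unfolding Rem_def Add_def by auto
    then have "card {e\<in>Epi. i \<in> e} = card ({e\<in>E'. i \<in> e} - Rem) + card Add"
      using card_Un_disjoint[of "{e\<in>E'. i \<in> e} - Rem" Add] fin1 fin2 unfolding Add_def by auto
    also have "card ({e\<in>E'. i \<in> e} - Rem) = card {e\<in>E'. i \<in> e} - card Rem"
      by (rule card_Diff_subset[OF finite_subset[OF RS fin1] RS])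
    finally show "gdeg Epi i = (dg i - card Rem) + card Add"
      using deg_card[OF Epi_sub] deg_card[OF E'sub] by simp
    show "card Rem \<le> dg i" using card_mono[OF fin1 RS] deg_card[OF E'sub] by simp
  qed
  have sb: "int (L i) \<le> sg i \<and> sg i \<le> int (R i)" by (rule sig_bounds[OF i])
  have zp: "int (zpn i) = sg i - int (L i)" using sb unfolding nzp_def by simp
  have zm: "int (zmn i) = int (R i) - sg i" using sb unfolding nzm_def by simp
  have sgd: "sg i = int (dg i) + int (xp i) - int (xm i)" unfolding sig_def by simp
  show ?thesis using degeq RemLe eqP eqM PP Z1 Z2 A B cXP cXM zp zm sgd sb by linarith
qed

end




locale cons = red +
  fixes E :: "nat set set"
  assumes Esub: "E \<subseteq> pairs n" and Edeg: "\<forall>i\<in>{1..n}. gdeg E i \<in> {L i..R i}"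
begin

definition Add :: "nat \<Rightarrow> nat set set" where "Add i = {e\<in>E - E'. i \<in> e}"
definition Rem :: "nat \<Rightarrow> nat set set" where "Rem i = {e\<in>E' - E. i \<in> e}"
definition na :: "nat \<Rightarrow> nat" where "na i = card (Add i)"
definition nb :: "nat \<Rightarrow> nat" where "nb i = card (Rem i)"
definition enA :: "nat \<Rightarrow> nat \<Rightarrow> nat set" where "enA i = (SOME h. bij_betw h {..<na i} (Add i))"
definition enR :: "nat \<Rightarrow> nat \<Rightarrow> nat set" where "enR i = (SOME h. bij_betw h {..<nb i} (Rem i))"
definition idxA :: "nat \<Rightarrow> nat set \<Rightarrow> nat" where "idxA i e = inv_into {..<na i} (enA i) e"
definition idxR :: "nat \<Rightarrow> nat set \<Rightarrow> nat" where "idxR i e = inv_into {..<nb i} (enR i) e"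
definition tt :: "nat \<Rightarrow> int" where "tt i = sg i - int (gdeg E i)"
definition zpc :: "nat \<Rightarrow> nat" where "zpc i = nat (tt i)"
definition zmc :: "nat \<Rightarrow> nat" where "zmc i = nat (- tt i)"
definition pc :: "nat \<Rightarrow> nat" where "pc i = xp i - na i - zpc i"

lemma finAdd: "finite (Add i)" and finRem: "finite (Rem i)"
  using finite_subset[OF _ pairs_fin] Esub E'sub unfolding Add_def Rem_def by auto

lemma enA_bij: "bij_betw (enA i) {..<na i} (Add i)"
proof -
  obtain h where "bij_betw h {0..<card (Add i)} (Add i)" using ex_bij_betw_nat_finite[OF finAdd] by blast
  then have "\<exists>h. bij_betw h {..<na i} (Add i)" unfolding na_def by (auto simp: atLeast0LessThan)
  then show ?thesis unfolding enA_def by (rule someI_ex)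
qed

lemma enR_bij: "bij_betw (enR i) {..<nb i} (Rem i)"
proof -
  obtain h where "bij_betw h {0..<card (Rem i)} (Rem i)" using ex_bij_betw_nat_finite[OF finRem] by blast
  then have "\<exists>h. bij_betw h {..<nb i} (Rem i)" unfolding nb_def by (auto simp: atLeast0LessThan)
  then show ?thesis unfolding enR_def by (rule someI_ex)
qed

lemma enA_mem: "k < na i \<Longrightarrow> enA i k \<in> Add i"
  using enA_bij[of i] by (auto simp: bij_betw_def)
lemma enR_mem: "k < nb i \<Longrightarrow> enR i k \<in> Rem i"
  using enR_bij[of i] by (auto simp: bij_betw_def)
lemma idxA: "e \<in> Add i \<Longrightarrow> idxA i e < na i \<and> enA i (idxA i e) = e"
  unfolding idxA_def using enA_bij[of i]
  by (metis bij_betw_def bij_betw_inv_into_right inv_into_into lessThan_iff)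
lemma idxR: "e \<in> Rem i \<Longrightarrow> idxR i e < nb i \<and> enR i (idxR i e) = e"
  unfolding idxR_def using enR_bij[of i]
  by (metis bij_betw_def bij_betw_inv_into_right inv_into_into lessThan_iff)
lemma idxA_en: "k < na i \<Longrightarrow> idxA i (enA i k) = k"
  unfolding idxA_def using enA_bij[of i] by (simp add: bij_betw_inv_into_left)
lemma idxR_en: "k < nb i \<Longrightarrow> idxR i (enR i k) = k"
  unfolding idxR_def using enR_bij[of i] by (simp add: bij_betw_inv_into_left)

lemma counts:
  assumes i: "i \<in> {1..n}"
  shows "na i + pc i + zpc i = xp i \<and> nb i + pc i + zmc i = xm i \<and> zpc i \<le> zpn i \<and> zmc i \<le> zmn i"
proof -
  have fin1: "finite {e\<in>E'. i \<in> e}" using finite_subset[OF _ pairs_fin] E'sub by auto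
  have finA: "finite (Add i)" by (rule finAdd)
  have RS: "Rem i \<subseteq> {e\<in>E'. i \<in> e}" unfolding Rem_def by auto
  have "{e\<in>E. i \<in> e} = ({e\<in>E'. i \<in> e} - Rem i) \<union> Add i" unfolding Rem_def Add_def by auto
  then have "card {e\<in>E. i \<in> e} = card ({e\<in>E'. i \<in> e} - Rem i) + card (Add i)"
    using card_Un_disjoint[of "{e\<in>E'. i \<in> e} - Rem i" "Add i"] fin1 finA unfolding Add_def by auto
  also have "card ({e\<in>E'. i \<in> e} - Rem i) = card {e\<in>E'. i \<in> e} - card (Rem i)"
    by (rule card_Diff_subset[OF finite_subset[OF RS fin1] RS])
  finally have degE: "gdeg E i = (dg i - nb i) + na i"
    using deg_card[OF Esub] deg_card[OF E'sub] unfolding na_def nb_def by simp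
  have nbd: "nb i \<le> dg i" using card_mono[OF fin1 RS] deg_card[OF E'sub] unfolding nb_def by simp
  have finE: "finite {e\<in>E. i \<in> e}" using finite_subset[OF _ pairs_fin] Esub by auto
  have finP: "finite {e\<in>pairs n - E'. i \<in> e}" "finite {e\<in>pairs n - E. i \<in> e}"
    using pairs_fin by auto
  have naR: "na i \<le> gdeg E i"
  proof -
    have "Add i \<subseteq> {e\<in>E. i \<in> e}" unfolding Add_def by auto
    from card_mono[OF finE this] show ?thesis using deg_card[OF Esub] unfolding na_def by simp
  qed
  have naN: "na i \<le> n - 1 - dg i"
  proof -
    have "Add i \<subseteq> {e\<in>pairs n - E'. i \<in> e}" unfolding Add_def using Esub by auto
    from card_mono[OF finP(1) this] show ?thesis using card_nonpairs_at(1)[OF i E'sub] unfolding na_def by simp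
  qed
  have nbN: "nb i \<le> n - 1 - gdeg E i"
  proof -
    have "Rem i \<subseteq> {e\<in>pairs n - E. i \<in> e}" unfolding Rem_def using E'sub by auto
    from card_mono[OF finP(2) this] show ?thesis using card_nonpairs_at(1)[OF i Esub] unfolding nb_def by simp
  qed
  have dgn: "dg i \<le> n - 1" using card_nonpairs_at(2)[OF i E'sub] .
  have dEn: "gdeg E i \<le> n - 1" using card_nonpairs_at(2)[OF i Esub] .
  have LRi: "L i \<le> gdeg E i" "gdeg E i \<le> R i" using Edeg i by auto
  have sb: "int (L i) \<le> sg i \<and> sg i \<le> int (R i)" by (rule sig_bounds[OF i])
  have zp: "int (zpn i) = sg i - int (L i)" using sb unfolding nzp_def by simp
  have zm: "int (zmn i) = int (R i) - sg i" using sb unfolding nzm_def by simp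
  have sgd: "sg i = int (dg i) + int (xp i) - int (xm i)" unfolding sig_def by simp
  have xpd: "xp i = min (R i) (n - dg i - 1)" unfolding nxp_def by simp
  have xmd: "xm i = min (n - L i - 1) (dg i)" unfolding nxm_def by simp
  have h6: "na i \<le> xp i" using naR naN LRi xpd by simp
  have h7: "nb i \<le> xm i" using nbd nbN LRi xmd by simp
  have h1: "int (gdeg E i) = int (dg i) - int (nb i) + int (na i)" using degE nbd by simp
  have h3: "tt i = sg i - int (gdeg E i)" unfolding tt_def by simp
  have h45: "int (zpc i) = max 0 (tt i)" "int (zmc i) = max 0 (- tt i)" unfolding zpc_def zmc_def by auto
  have a1: "int (na i) + int (zpc i) \<le> int (xp i)"
  proof (cases "tt i \<ge> 0")
    case True then show ?thesis using h45 h1 h3 sgd h7 by simp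
  next
    case False then show ?thesis using h45 h6 by simp
  qed
  have pcz: "int (pc i) = int (xp i) - int (na i) - int (zpc i)" unfolding pc_def using a1 by simp
  have b1: "int (nb i) + int (pc i) + int (zmc i) = int (xm i)"
  proof (cases "tt i \<ge> 0")
    case True then show ?thesis using h45 h1 h3 sgd pcz by simp
  next
    case False then show ?thesis using h45 h1 h3 sgd pcz by simp
  qed
  have c1: "int (zpc i) \<le> int (zpn i)"
  proof (cases "tt i \<ge> 0")
    case True then show ?thesis using h45 h3 zp LRi by simp
  next
    case False then show ?thesis using h45 by simp
  qed
  have c2: "int (zmc i) \<le> int (zmn i)"
  proof (cases "tt i \<ge> 0")
    case True then show ?thesis using h45 by simp
  next
    case False then show ?thesis using h45 h3 zm LRi by simp
  qed
  show ?thesis using a1 pcz b1 c1 c2 by linarith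
qed


fun p0 :: "hnode \<Rightarrow> hnode" where
  "p0 (Ym e i) = (if e \<in> E then Ym e (oth e i) else Xm i (idxR i e))"
| "p0 (Yp e i) = (if e \<in> E then Xp i (idxA i e) else Yp e (oth e i))"
| "p0 (Xp i k) = (if k < na i then Yp (enA i k) i
     else if k < na i + pc i then Xm i (k - na i + nb i)
     else if k < na i + pc i + zpc i then Zp i (k - na i - pc i) else Xp i k)"
| "p0 (Xm i k) = (if k < nb i then Ym (enR i k) i
     else if k < nb i + pc i then Xp i (k - nb i + na i)
     else if k < nb i + pc i + zmc i then Zm i (k - nb i - pc i) else Xm i k)"
| "p0 (Zp i k) = (if k < zpc i then Xp i (na i + pc i + k) else Zp i k)"
| "p0 (Zm i k) = (if k < zmc i then Xm i (nb i + pc i + k) else Zm i k)"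
| "p0 Zhat = Zhat"

lemma P0_Ym:
  assumes v: "Ym e i \<in> V"
  shows "p0 (Ym e i) \<noteq> Ym e i \<and> p0 (Ym e i) \<in> V \<and> p0 (p0 (Ym e i)) = Ym e i \<and> {Ym e i, p0 (Ym e i)} \<in> Ed"
proof -
  have ei: "e \<in> E'" "i \<in> e" using v by (auto simp: V_simps)
  have ep: "e \<in> pairs n" using ei E'sub by auto
  have iV: "i \<in> {1..n}" using pairs_range[OF ep ei(2)] .
  let ?j = "oth e i"
  have o: "e = {i, ?j}" "?j \<noteq> i" "oth e ?j = i" "?j \<in> e" using pairs_oth[OF ep ei(2)] by auto
  show ?thesis
  proof (cases "e \<in> E")
    case True
    have "{Ym e i, Ym e ?j} \<in> Ed" using E_YmYm[OF ei(1) o(1)] o(2) by simp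
    then show ?thesis using True o ei by (simp add: V_simps)
  next
    case False
    then have r: "e \<in> Rem i" unfolding Rem_def using ei by auto
    let ?k = "idxR i e"
    have k: "?k < nb i" "enR i ?k = e" using idxR[OF r] by auto
    have "?k < xm i" using k counts[OF iV] by linarith
    then have xV: "Xm i ?k \<in> V0" using iV by (simp add: V0_simps)
    have "{Xm i ?k, Ym e i} \<in> Ed" using E_XmYm[OF xV] ei by (simp add: V0_simps)
    then show ?thesis using False k xV V0_V by (auto simp: insert_commute)
  qed
qed

lemma P0_Yp:
  assumes v: "Yp e i \<in> V"
  shows "p0 (Yp e i) \<noteq> Yp e i \<and> p0 (Yp e i) \<in> V \<and> p0 (p0 (Yp e i)) = Yp e i \<and> {Yp e i, p0 (Yp e i)} \<in> Ed"
proof -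
  have ei: "e \<in> pairs n - E'" "i \<in> e" using v by (auto simp: V_simps)
  have ep: "e \<in> pairs n" using ei by auto
  have iV: "i \<in> {1..n}" using pairs_range[OF ep ei(2)] .
  let ?j = "oth e i"
  have o: "e = {i, ?j}" "?j \<noteq> i" "oth e ?j = i" "?j \<in> e" using pairs_oth[OF ep ei(2)] by auto
  show ?thesis
  proof (cases "e \<in> E")
    case False
    have "{Yp e i, Yp e ?j} \<in> Ed" using E_YpYp[OF ei(1) o(1)] o(2) by simp
    then show ?thesis using False o ei by (simp add: V_simps)
  next
    case True
    then have r: "e \<in> Add i" unfolding Add_def using ei by auto
    let ?k = "idxA i e"
    have k: "?k < na i" "enA i ?k = e" using idxA[OF r] by auto
    have "?k < xp i" using k counts[OF iV] by linarith
    then have xV: "Xp i ?k \<in> V0" using iV by (simp add: V0_simps)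
    have "{Xp i ?k, Yp e i} \<in> Ed" using E_XpYp[OF xV] ei by (simp add: V0_simps)
    then show ?thesis using True k xV V0_V by (auto simp: insert_commute)
  qed
qed

lemma P0_Xp:
  assumes v: "Xp i k \<in> V"
  shows "p0 (Xp i k) \<noteq> Xp i k \<and> p0 (Xp i k) \<in> V \<and> p0 (p0 (Xp i k)) = Xp i k \<and> {Xp i k, p0 (Xp i k)} \<in> Ed"
proof -
  have iV: "i \<in> {1..n}" and kx: "k < xp i" using v by (auto simp: V_simps)
  have cn: "na i + pc i + zpc i = xp i" "nb i + pc i + zmc i = xm i" "zpc i \<le> zpn i"
    using counts[OF iV] by auto
  have vV0: "Xp i k \<in> V0" using iV kx by (simp add: V0_simps)
  consider (a) "k < na i" | (b) "\<not> k < na i" "k < na i + pc i"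
    | (c) "\<not> k < na i + pc i" "k < na i + pc i + zpc i" using kx cn by linarith
  then show ?thesis
  proof cases
    case a
    let ?e = "enA i k"
    have e: "?e \<in> Add i" using enA_mem[OF a] .
    then have ee: "?e \<in> E" "?e \<notin> E'" "i \<in> ?e" "?e \<in> pairs n" unfolding Add_def using Esub by auto
    have yV: "Yp ?e i \<in> V0" using ee by (simp add: V0_simps)
    have "{Xp i k, Yp ?e i} \<in> Ed" by (rule E_XpYp[OF vV0 yV])
    then show ?thesis using a ee yV V0_V idxA_en[OF a] by auto
  next
    case b
    let ?l = "k - na i + nb i"
    have l: "\<not> ?l < nb i" "?l < nb i + pc i" "?l - nb i + na i = k" using b by auto
    have xV: "Xm i ?l \<in> V0" using iV l cn by (simp add: V0_simps)
    have "{Xp i k, Xm i ?l} \<in> Ed" by (rule E_XpXm[OF vV0 xV])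
    then show ?thesis using b l xV V0_V by auto
  next
    case c
    let ?m = "k - na i - pc i"
    have m: "?m < zpc i" "na i + pc i + ?m = k" using c by auto
    have zV: "Zp i ?m \<in> V0" using iV m cn by (simp add: V0_simps)
    have "{Zp i ?m, Xp i k} \<in> Ed" by (rule E_ZpXp[OF zV vV0])
    then show ?thesis using c m zV V0_V by (auto simp: insert_commute)
  qed
qed

lemma P0_Xm:
  assumes v: "Xm i k \<in> V"
  shows "p0 (Xm i k) \<noteq> Xm i k \<and> p0 (Xm i k) \<in> V \<and> p0 (p0 (Xm i k)) = Xm i k \<and> {Xm i k, p0 (Xm i k)} \<in> Ed"
proof -
  have iV: "i \<in> {1..n}" and kx: "k < xm i" using v by (auto simp: V_simps)
  have cn: "na i + pc i + zpc i = xp i" "nb i + pc i + zmc i = xm i" "zmc i \<le> zmn i"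
    using counts[OF iV] by auto
  have vV0: "Xm i k \<in> V0" using iV kx by (simp add: V0_simps)
  consider (a) "k < nb i" | (b) "\<not> k < nb i" "k < nb i + pc i"
    | (c) "\<not> k < nb i + pc i" "k < nb i + pc i + zmc i" using kx cn by linarith
  then show ?thesis
  proof cases
    case a
    let ?e = "enR i k"
    have e: "?e \<in> Rem i" using enR_mem[OF a] .
    then have ee: "?e \<notin> E" "?e \<in> E'" "i \<in> ?e" unfolding Rem_def by auto
    have yV: "Ym ?e i \<in> V0" using ee by (simp add: V0_simps)
    have "{Xm i k, Ym ?e i} \<in> Ed" by (rule E_XmYm[OF vV0 yV])
    then show ?thesis using a ee yV V0_V idxR_en[OF a] by auto
  next
    case b
    let ?l = "k - nb i + na i"
    have l: "\<not> ?l < na i" "?l < na i + pc i" "?l - na i + nb i = k" using b by auto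
    have xV: "Xp i ?l \<in> V0" using iV l cn by (simp add: V0_simps)
    have "{Xp i ?l, Xm i k} \<in> Ed" by (rule E_XpXm[OF xV vV0])
    then show ?thesis using b l xV V0_V by (auto simp: insert_commute)
  next
    case c
    let ?m = "k - nb i - pc i"
    have m: "?m < zmc i" "nb i + pc i + ?m = k" using c by auto
    have zV: "Zm i ?m \<in> V0" using iV m cn by (simp add: V0_simps)
    have "{Zm i ?m, Xm i k} \<in> Ed" by (rule E_ZmXm[OF zV vV0])
    then show ?thesis using c m zV V0_V by (auto simp: insert_commute)
  qed
qed

lemma P0_Zp:
  assumes v: "Zp i k \<in> V" and ne: "p0 (Zp i k) \<noteq> Zp i k"
  shows "p0 (Zp i k) \<in> V \<and> p0 (p0 (Zp i k)) = Zp i k \<and> {Zp i k, p0 (Zp i k)} \<in> Ed"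
proof -
  have iV: "i \<in> {1..n}" and kz: "k < zpn i" using v by (auto simp: V_simps)
  have kc: "k < zpc i" using ne by (auto split: if_splits)
  have cn: "na i + pc i + zpc i = xp i" using counts[OF iV] by auto
  have vV0: "Zp i k \<in> V0" using iV kz by (simp add: V0_simps)
  have xV: "Xp i (na i + pc i + k) \<in> V0" using iV kc cn by (simp add: V0_simps)
  have "{Zp i k, Xp i (na i + pc i + k)} \<in> Ed" by (rule E_ZpXp[OF vV0 xV])
  then show ?thesis using kc xV V0_V by auto
qed

lemma P0_Zm:
  assumes v: "Zm i k \<in> V" and ne: "p0 (Zm i k) \<noteq> Zm i k"
  shows "p0 (Zm i k) \<in> V \<and> p0 (p0 (Zm i k)) = Zm i k \<and> {Zm i k, p0 (Zm i k)} \<in> Ed"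
proof -
  have iV: "i \<in> {1..n}" and kz: "k < zmn i" using v by (auto simp: V_simps)
  have kc: "k < zmc i" using ne by (auto split: if_splits)
  have cn: "nb i + pc i + zmc i = xm i" using counts[OF iV] by auto
  have vV0: "Zm i k \<in> V0" using iV kz by (simp add: V0_simps)
  have xV: "Xm i (nb i + pc i + k) \<in> V0" using iV kc cn by (simp add: V0_simps)
  have "{Zm i k, Xm i (nb i + pc i + k)} \<in> Ed" by (rule E_ZmXm[OF vV0 xV])
  then show ?thesis using kc xV V0_V by auto
qed

lemma P0:
  assumes v: "v \<in> V" and ne: "p0 v \<noteq> v"
  shows "p0 v \<in> V \<and> p0 (p0 v) = v \<and> {v, p0 v} \<in> Ed"
proof (cases v)
  case (Ym e i) then show ?thesis using P0_Ym v by blast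
next
  case (Yp e i) then show ?thesis using P0_Yp v by blast
next
  case (Xp i k) then show ?thesis using P0_Xp v by blast
next
  case (Xm i k) then show ?thesis using P0_Xm v by blast
next
  case (Zp i k) then show ?thesis using P0_Zp v ne by blast
next
  case (Zm i k) then show ?thesis using P0_Zm v ne by blast
next
  case Zhat then show ?thesis using ne by simp
qed

lemma W0:
  assumes v: "v \<in> V" and eq: "p0 v = v"
  shows "v \<in> Zn \<or> v = Zhat"
proof (cases v)
  case (Ym e i) then show ?thesis using P0_Ym v eq by blast
next
  case (Yp e i) then show ?thesis using P0_Yp v eq by blast
next
  case (Xp i k) then show ?thesis using P0_Xp v eq by blast
next
  case (Xm i k) then show ?thesis using P0_Xm v eq by blast
next
  case (Zp i k) then show ?thesis using v by (auto simp: V_simps Zn_simps)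
next
  case (Zm i k) then show ?thesis using v by (auto simp: V_simps Zn_simps)
qed simp


lemma construct: "\<exists>\<pi>. invl n E' L R \<pi> \<and> invl.Epi n E' \<pi> = E"
proof -
  define W where "W = {v\<in>V. p0 v = v}"
  define S where "S = V - W"
  have SW: "\<forall>v\<in>S. p0 v \<in> S \<and> p0 v \<noteq> v \<and> p0 (p0 v) = v"
  proof
    fix v assume v: "v \<in> S"
    then have vV: "v \<in> V" and ne: "p0 v \<noteq> v" unfolding S_def W_def by auto
    have P: "p0 v \<in> V \<and> p0 (p0 v) = v \<and> {v, p0 v} \<in> Ed" by (rule P0[OF vV ne])
    then have "p0 v \<notin> W" using ne unfolding W_def by auto
    then show "p0 v \<in> S \<and> p0 v \<noteq> v \<and> p0 (p0 v) = v" using P ne unfolding S_def by auto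
  qed
  have SV: "S \<subseteq> V" unfolding S_def by auto
  have finS: "finite S" using finite_subset[OF SV fin_V] .
  have evS: "even (card S)" by (rule even_inv[OF finS SW])
  have WS: "W = V - S" unfolding S_def W_def by auto
  have cW: "card W = card V - card S" unfolding WS by (rule card_Diff_subset[OF finS SV])
  have le: "card S \<le> card V" by (rule card_mono[OF fin_V SV])
  have evW: "even (card W)" unfolding cW using even_V evS le by (simp add: even_diff_nat)
  have finW: "finite W" using fin_V unfolding W_def by auto
  obtain \<rho> where \<rho>: "\<forall>w\<in>W. \<rho> w \<in> W \<and> \<rho> w \<noteq> w \<and> \<rho> (\<rho> w) = w"
    using inv_even[OF finW evW] by blast
  define \<pi> where "\<pi> v = (if p0 v = v then \<rho> v else p0 v)" for v
  have WZ: "w \<in> Zn \<or> w = Zhat" if "w \<in> W" for w using W0 that unfolding W_def by auto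
  have inv: "\<forall>v\<in>V. \<pi> v \<in> V \<and> \<pi> v \<noteq> v \<and> \<pi> (\<pi> v) = v \<and> {v, \<pi> v} \<in> Ed"
  proof
    fix v assume v: "v \<in> V"
    show "\<pi> v \<in> V \<and> \<pi> v \<noteq> v \<and> \<pi> (\<pi> v) = v \<and> {v, \<pi> v} \<in> Ed"
    proof (cases "p0 v = v")
      case True
      then have vW: "v \<in> W" using v unfolding W_def by auto
      have r: "\<rho> v \<in> W" "\<rho> v \<noteq> v" "\<rho> (\<rho> v) = v" using \<rho> vW by auto
      have rV: "\<rho> v \<in> V" "p0 (\<rho> v) = \<rho> v" using r(1) unfolding W_def by auto
      have pv: "\<pi> v = \<rho> v" unfolding \<pi>_def using True by simp
      have ppv: "\<pi> (\<rho> v) = v" unfolding \<pi>_def using rV r by simp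
      have edge: "{v, \<rho> v} \<in> Ed"
      proof -
        have a: "v \<in> Zn \<or> v = Zhat" using WZ vW by blast
        have b: "\<rho> v \<in> Zn \<or> \<rho> v = Zhat" using WZ r(1) by blast
        show ?thesis
        proof (cases "v = Zhat")
          case True
          then have "\<rho> v \<in> Zn" using b r(2) by auto
          then show ?thesis using E_hZ[of "\<rho> v"] v True by simp
        next
          case False
          then have vz: "v \<in> Zn" using a by auto
          show ?thesis
          proof (cases "\<rho> v = Zhat")
            case True
            have hV: "Zhat \<in> V" using rV True by simp
            then show ?thesis using E_hZ[OF hV vz] True by (simp add: insert_commute)
          next
            case False
            then have "\<rho> v \<in> Zn" using b by auto
            then show ?thesis using E_ZZ[OF vz _ r(2)[symmetric]] by simp
          qed
        qed
      qed
      show ?thesis using pv ppv edge r(2) rV(1) by simp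
    next
      case False
      have P: "p0 v \<in> V \<and> p0 (p0 v) = v \<and> {v, p0 v} \<in> Ed" by (rule P0[OF v False])
      have pv: "\<pi> v = p0 v" unfolding \<pi>_def using False by simp
      have "p0 (p0 v) \<noteq> p0 v" using P False by auto
      then have "\<pi> (p0 v) = v" unfolding \<pi>_def using P by simp
      then show ?thesis using pv P False by simp
    qed
  qed
  have I: "invl n E' L R \<pi>" unfolding invl_def invl_axioms_def red_def using E'sub LR inv by blast
  have piY: "\<pi> v = p0 v" if "v \<in> V" "isY v" for v
  proof -
    have "p0 v \<noteq> v" using that P0_Ym P0_Yp by (cases v) auto
    then show ?thesis unfolding \<pi>_def by simp
  qed
  have "invl.Epi n E' \<pi> = E"
  proof (rule set_eqI)
    fix e
    show "e \<in> invl.Epi n E' \<pi> \<longleftrightarrow> e \<in> E"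
    proof (cases "e \<in> pairs n")
      case False
      then show ?thesis using invl.Epi_sub[OF I] Esub by auto
    next
      case True
      then obtain a b where ab: "e = {a, b}" by (rule pairsE)
      have a: "a \<in> e" using ab by simp
      show ?thesis
      proof (cases "e \<in> E'")
        case True
        have yV: "Ym e a \<in> V" using True a by (simp add: V_simps)
        have "\<pi> (Ym e a) = p0 (Ym e a)" using piY[OF yV] by simp
        then show ?thesis using invl.Epi_Ym[OF I True a] by simp
      next
        case False
        have ee: "e \<in> pairs n - E'" using False \<open>e \<in> pairs n\<close> by simp
        have yV: "Yp e a \<in> V" using ee a by (simp add: V_simps)
        have "\<pi> (Yp e a) = p0 (Yp e a)" using piY[OF yV] by simp
        then show ?thesis using invl.Epi_Yp[OF I ee a] by simp
      qed
    qed
  qed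
  then show ?thesis using I by blast
qed

end




theorem theorem4p1:
  fixes n :: nat and E' :: "nat set set" and c :: "nat set \<Rightarrow> real" and B :: real
    and L R :: "nat \<Rightarrow> nat"
  assumes "E' \<subseteq> pairs n"
    and "\<forall>e\<in>pairs n. c e \<ge> 0"
    and "B \<ge> 0"
    and "\<forall>i\<in>{1..n}. L i \<le> R i \<and> R i \<le> n - 1"
  shows "(\<exists>M. perfect_matching (HV n E' L R) (HE n E' L R) M \<and> mcost c M \<le> B)
     \<longleftrightarrow> (\<exists>E. E \<subseteq> pairs n \<and> (\<Sum>e\<in>(E - E') \<union> (E' - E). c e) \<le> B
              \<and> (\<forall>i\<in>{1..n}. gdeg E i \<in> {L i..R i}))"
proof -
  have Rd: "red n E' L R" unfolding red_def using assms(1) assms(4) by blast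
  show ?thesis
  proof
    assume "\<exists>M. perfect_matching (HV n E' L R) (HE n E' L R) M \<and> mcost c M \<le> B"
    then obtain M where pm: "perfect_matching (HV n E' L R) (HE n E' L R) M" and cM: "mcost c M \<le> B"
      by blast
    obtain \<pi> where pi: "\<forall>v\<in>HV n E' L R. \<pi> v \<in> HV n E' L R \<and> \<pi> v \<noteq> v \<and> \<pi> (\<pi> v) = v \<and> {v, \<pi> v} \<in> HE n E' L R"
      and Meq: "M = {{v, \<pi> v} | v. v \<in> HV n E' L R}"
      using pm_inv[OF pm red.edges_ok[OF Rd]] by blast
    have I: "invl n E' L R \<pi>" unfolding invl_def invl_axioms_def using Rd pi by blast
    have "mcost c M = (\<Sum>v\<in>HV n E' L R. hc c v (\<pi> v))"
      unfolding Meq by (rule cost_inv[OF red.fin_V[OF Rd]]) (use pi in blast)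
    also have "\<dots> = (\<Sum>e\<in>(invl.Epi n E' \<pi> - E') \<union> (E' - invl.Epi n E' \<pi>). c e)"
      by (rule invl.cost[OF I])
    finally have cost: "(\<Sum>e\<in>(invl.Epi n E' \<pi> - E') \<union> (E' - invl.Epi n E' \<pi>). c e) \<le> B"
      using cM by simp
    have "\<forall>i\<in>{1..n}. gdeg (invl.Epi n E' \<pi>) i \<in> {L i..R i}"
      using invl.deg[OF I] by auto
    then show "\<exists>E. E \<subseteq> pairs n \<and> (\<Sum>e\<in>(E - E') \<union> (E' - E). c e) \<le> B
              \<and> (\<forall>i\<in>{1..n}. gdeg E i \<in> {L i..R i})"
      using cost invl.Epi_sub[OF I] by blast
  next
    assume "\<exists>E. E \<subseteq> pairs n \<and> (\<Sum>e\<in>(E - E') \<union> (E' - E). c e) \<le> B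
              \<and> (\<forall>i\<in>{1..n}. gdeg E i \<in> {L i..R i})"
    then obtain E where Es: "E \<subseteq> pairs n" and cE: "(\<Sum>e\<in>(E - E') \<union> (E' - E). c e) \<le> B"
      and dE: "\<forall>i\<in>{1..n}. gdeg E i \<in> {L i..R i}" by blast
    have C: "cons n E' L R E" unfolding cons_def cons_axioms_def using Rd Es dE by blast
    obtain \<pi> where I: "invl n E' L R \<pi>" and Ep: "invl.Epi n E' \<pi> = E"
      using cons.construct[OF C] by blast
    have pi: "\<forall>v\<in>HV n E' L R. \<pi> v \<in> HV n E' L R \<and> \<pi> v \<noteq> v \<and> \<pi> (\<pi> v) = v \<and> {v, \<pi> v} \<in> HE n E' L R"
      using invl.inv[OF I] .
    let ?M = "{{v, \<pi> v} | v. v \<in> HV n E' L R}"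
    have pm: "perfect_matching (HV n E' L R) (HE n E' L R) ?M" by (rule inv_pm[OF pi])
    have "mcost c ?M = (\<Sum>v\<in>HV n E' L R. hc c v (\<pi> v))"
      by (rule cost_inv[OF red.fin_V[OF Rd]]) (use pi in blast)
    also have "\<dots> = (\<Sum>e\<in>(invl.Epi n E' \<pi> - E') \<union> (E' - invl.Epi n E' \<pi>). c e)"
      by (rule invl.cost[OF I])
    finally have "mcost c ?M \<le> B" using cE Ep by simp
    then show "\<exists>M. perfect_matching (HV n E' L R) (HE n E' L R) M \<and> mcost c M \<le> B"
      using pm by blast
  qed
qed


end
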